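(* Identify $\Gamma(Lev,\mathbb F x)$ with $\mathbb F[\mathrm{BHS}]$ via $u\mapsto\mathscr O_{\Sigma_n}(\underline u)\otimes x^{\otimes n}$ for $u\in\mathrm{BHS}(n)$, and let $1_{\mathscr L}=(1,0,0,\dots)\in\mathrm{BHS}(1)$ (corresponding to $1\otimes x$). Then for every $u\in\mathrm{BHS}(n)$, $$u=\phi_{\underline u,\,(u(0),u(1),\dots,u(o(u)))}(1_{\mathscr L},\dots,1_{\mathscr L})\quad(o(u)+1\text{ arguments}).$$ In particular $\mathbb F[\mathrm{BHS}]$ is generated as a $\Gamma(Lev)$-algebra by $1_{\mathscr L}$.
   Context: $[n]=\{1,\dots,n\}$. $\mathscr L'(n)$ ($n\ge1$): maps $h:[n]\to\mathbb N$ with $\sum_i2^{-h(i)}=1$, $\sigma\cdot h=h\circ\sigma^{-1}$; set operad with unit $1\mapsto0$ and full composition $\mu(h\otimes g_1\otimes\dots\otimes g_n)$ sending $m_1+\dots+m_{j-1}+t$ to $h(j)+g_j(t)$; $Lev=\mathbb F[\mathscr L']$. $\Gamma(Lev,V)=\bigoplus_n(Lev(n)\otimes V^{\otimes n})^{\Sigma_n}$ with Fresse's divided power monad multiplication $\tilde\mu$; $\Gamma(Lev,\mathbb F x)$ is the free $\Gamma(Lev)$-algebra on one generator. $\mathrm{BHS}(n)=\{u\in\mathbb N^{\mathbb N}:\sum_iu(i)=n,\ \sum_iu(i)2^{-i}=1\}$; $o(u)$ is the largest $j$ with $u(j)\ne0$; $\underline u\in\mathscr L'(n)$ sends the $j$-th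 consecutive interval (of length $u(j)$) to $j$; $\mathscr O_{\Sigma_n}(\underline u)=\sum_{y\in\Sigma_n\cdot\underline u}y$. Compositions ${\underline r}\in\mathrm{Comp}_p(n)$ are identified with partitions of $[n]$ into consecutive intervals, $\Sigma_{\underline r}$ the Young subgroup preserving them. For $h\in\mathscr L'(n)$ constant on each interval of ${\underline r}$ and $a_i\in\Gamma(Lev,\mathbb F x)$, $\phi_{h,{\underline r}}(a_1,\dots,a_p)=\tilde\mu\big(\sum_{\sigma\in\Sigma_n/\Sigma_{\underline r}}\sigma\cdot h\otimes\sigma\cdot(a_1^{\otimes r_1}\otimes\dots\otimes a_p^{\otimes r_p})\big)$. *)

theory Defs
  imports Complex_Main "HOL-Combinatorics.Permutations"
begin

text \<open>Conventions: the set [n] is modelled as the index set {0..<n}; an element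
  h of L'(n) is the list [h(1),...,h(n)] (0-based positions). Elements of the
  free F-module F[X] on a set X are finitely supported functions X => F.
  Gamma(Lev, F x) sits inside the direct sum of Lev(n) (x)^n = F[L'(n)], i.e. it is
  modelled by functions nat list => F (the basis element h (x) x^n is the
  indicator of h). Gamma(Lev)(n) (x) W^(x)n with W = Gamma(Lev,F x) sits inside
  F[L'(n) x (nat list)^n]; a pure tensor w_1 (x)...(x) w_n corresponds to the
  function (g_1,...,g_n) |-> prod_i w_i(g_i).\<close>

definition lev :: "nat \<Rightarrow> nat list set" where
  "lev n = {h. length h = n \<and> (\<Sum>i<n. (1/2::real) ^ (h ! i)) = 1}"

text \<open>Left action of a permutation on a list of length n: sigma.h = h o sigma^-1.
  Also used for the action of Sigma_n on W^(x)n by permuting tensor factors.\<close>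
definition perm_act :: "(nat \<Rightarrow> nat) \<Rightarrow> 'b list \<Rightarrow> 'b list" where
  "perm_act \<sigma> h = map (\<lambda>i. h ! inv \<sigma> i) [0..<length h]"

definition op_comp :: "nat list \<Rightarrow> nat list list \<Rightarrow> nat list" where
  "op_comp h gs = concat (map (\<lambda>j. map (\<lambda>t. h ! j + t) (gs ! j)) [0..<length h])"

definition interval :: "nat list \<Rightarrow> nat \<Rightarrow> nat set" where
  "interval r j = {sum_list (take j r) ..< sum_list (take (Suc j) r)}"

definition young :: "nat list \<Rightarrow> (nat \<Rightarrow> nat) set" where
  "young r = {\<tau>. \<tau> permutes {0..<sum_list r} \<and>
                 (\<forall>j<length r. \<tau> ` interval r j = interval r j)}"

definition cosets :: "nat list \<Rightarrow> (nat \<Rightarrow> nat) set set" where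
  "cosets r = {(\<lambda>\<tau>. \<sigma> \<circ> \<tau>) ` young r | \<sigma>. \<sigma> permutes {0..<sum_list r}}"

definition ptensor :: "(nat list \<Rightarrow> 'a::field) list \<Rightarrow> nat list list \<Rightarrow> 'a" where
  "ptensor ws gs = (if length gs = length ws
                    then (\<Prod>i<length ws. (ws ! i) (gs ! i)) else 0)"

definition blocks :: "nat list \<Rightarrow> 'b list \<Rightarrow> 'b list" where
  "blocks r as = concat (map (\<lambda>j. replicate (r ! j) (as ! j)) [0..<length r])"

text \<open>Divided power monad multiplication Gamma(Lev, Gamma(Lev, F x)) -> Gamma(Lev, F x),
  i.e. the restriction of the operadic composition to invariants.\<close>
definition gamma_mu :: "(nat list \<times> nat list list \<Rightarrow> 'a::field) \<Rightarrow> nat list \<Rightarrow> 'a" where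
  "gamma_mu \<Phi> k = (\<Sum>x\<in>{x. \<Phi> x \<noteq> 0 \<and> op_comp (fst x) (snd x) = k}. \<Phi> x)"

definition phi :: "nat list \<Rightarrow> nat list \<Rightarrow> (nat list \<Rightarrow> 'a::field) list \<Rightarrow> nat list \<Rightarrow> 'a" where
  "phi h r as = gamma_mu (\<lambda>x. \<Sum>C\<in>cosets r.
       (let \<sigma> = (SOME \<sigma>. \<sigma> \<in> C) in
        (if fst x = perm_act \<sigma> h then 1 else 0) * ptensor (perm_act \<sigma> (blocks r as)) (snd x)))"

definition bhs :: "nat \<Rightarrow> (nat \<Rightarrow> nat) set" where
  "bhs n = {u. finite {i. u i \<noteq> 0} \<and> (\<Sum>i\<in>{i. u i \<noteq> 0}. u i) = n \<and>
               (\<Sum>i\<in>{i. u i \<noteq> 0}. real (u i) * (1/2) ^ i) = 1}"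

definition ord :: "(nat \<Rightarrow> nat) \<Rightarrow> nat" where
  "ord u = (GREATEST j. u j \<noteq> 0)"

definition ul :: "(nat \<Rightarrow> nat) \<Rightarrow> nat list" where
  "ul u = concat (map (\<lambda>j. replicate (u j) j) [0..<Suc (ord u)])"

definition oneL :: "nat list \<Rightarrow> 'a::field" where
  "oneL k = (if k = [0] then 1 else 0)"

definition orbit_sum :: "nat \<Rightarrow> nat list \<Rightarrow> nat list \<Rightarrow> 'a::field" where
  "orbit_sum n h k = (if k \<in> {perm_act \<sigma> h | \<sigma>. \<sigma> permutes {0..<n}} then 1 else 0)"

end

theory Submission
  imports Defs
begin

definition Hl :: "nat list \<Rightarrow> nat list" where
  "Hl r = concat (map (\<lambda>j. replicate (r!j) j) [0..<length r])"

lemma Hl_Nil: "Hl [] = []" by (simp add: Hl_def)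

lemma Hl_Cons: "Hl (a#r) = replicate a 0 @ map Suc (Hl r)"
proof -
  have "[0..<length (a#r)] = 0 # map Suc [0..<length r]"
    by (simp add: upt_conv_Cons map_Suc_upt del: upt_Suc)
  thus ?thesis by (simp add: Hl_def map_concat o_def)
qed

lemma length_Hl: "length (Hl r) = sum_list r"
  by (induction r) (auto simp: Hl_Nil Hl_Cons)

lemma Hl_nth:
  "j < sum_list r \<Longrightarrow> k < length r \<Longrightarrow>
   (Hl r ! j = k) = (sum_list (take k r) \<le> j \<and> j < sum_list (take (Suc k) r))"
proof (induction r arbitrary: j k)
  case Nil thus ?case by simp
next
  case (Cons a r)
  show ?case
  proof (cases "j < a")
    case True
    then show ?thesis by (cases k) (auto simp: Hl_Cons nth_append)
  next
    case False
    hence jr: "j - a < sum_list r" using Cons.prems by simp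
    have e: "Hl (a#r) ! j = Suc (Hl r ! (j - a))"
      using False jr by (simp add: Hl_Cons nth_append length_Hl)
    show ?thesis
    proof (cases k)
      case 0 thus ?thesis using e False by simp
    next
      case (Suc k')
      have "k' < length r" using Cons.prems Suc by simp
      from Cons.IH[OF jr this] show ?thesis using e False Suc by auto
    qed
  qed
qed

lemma Hl_nth_lt: "j < sum_list r \<Longrightarrow> Hl r ! j < length r"
proof (induction r arbitrary: j)
  case Nil thus ?case by simp
next
  case (Cons a r)
  show ?case
  proof (cases "j < a")
    case True thus ?thesis by (simp add: Hl_Cons nth_append)
  next
    case False
    hence jr: "j - a < sum_list r" using Cons.prems by simp
    have e: "Hl (a#r) ! j = Suc (Hl r ! (j - a))"
      using False jr by (simp add: Hl_Cons nth_append length_Hl)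
    thus ?thesis using Cons.IH[OF jr] by simp
  qed
qed

lemma sum_take_le: "sum_list (take m (r::nat list)) \<le> sum_list r"
proof -
  have "sum_list r = sum_list (take m r) + sum_list (drop m r)"
    by (metis append_take_drop_id sum_list_append)
  thus ?thesis by simp
qed

lemma interval_fiber:
  "k < length r \<Longrightarrow> interval r k = {j. j < sum_list r \<and> Hl r ! j = k}"
  unfolding interval_def
  using Hl_nth[of _ r k] sum_take_le[of "Suc k" r] by fastforce

lemma young_stab:
  assumes t: "\<tau> \<in> young r" and j: "j < sum_list r"
  shows "Hl r ! (inv \<tau> j) = Hl r ! j"
proof -
  define k where "k = Hl r ! j"
  have kL: "k < length r" using Hl_nth_lt[OF j] k_def by simp
  have tp: "\<tau> permutes {0..<sum_list r}" and ti: "\<tau> ` interval r k = interval r k"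
    using t kL unfolding young_def by auto
  have "j \<in> interval r k" using interval_fiber[OF kL] j k_def by simp
  then obtain x where x: "x \<in> interval r k" "j = \<tau> x" using ti by blast
  have "inv \<tau> j = x" using x permutes_inverses(2)[OF tp] by simp
  thus ?thesis using x interval_fiber[OF kL] k_def by simp
qed

lemma perm_act_young:
  assumes s: "\<sigma> permutes {0..<sum_list r}" and t: "\<tau> \<in> young r"
  shows "perm_act (\<sigma> \<circ> \<tau>) (Hl r) = perm_act \<sigma> (Hl r)"
proof -
  have tp: "\<tau> permutes {0..<sum_list r}" using t unfolding young_def by auto
  have iv: "inv (\<sigma> \<circ> \<tau>) = inv \<tau> \<circ> inv \<sigma>"
    using o_inv_distrib permutes_bij s tp by blast
  have "\<And>i. i < sum_list r \<Longrightarrow> inv \<sigma> i < sum_list r"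
    using permutes_in_image[OF permutes_inv[OF s]] by simp
  thus ?thesis unfolding perm_act_def iv length_Hl
    using young_stab[OF t] by simp
qed

lemma perm_act_same_young:
  assumes s: "\<sigma> permutes {0..<sum_list r}" and p: "\<pi> permutes {0..<sum_list r}"
    and e: "perm_act \<pi> (Hl r) = perm_act \<sigma> (Hl r)"
  shows "inv \<sigma> \<circ> \<pi> \<in> young r"
proof -
  let ?N = "sum_list r"
  define \<rho> where "\<rho> = inv \<sigma> \<circ> \<pi>"
  have rp: "\<rho> permutes {0..<?N}" unfolding \<rho>_def
    using permutes_compose[OF p permutes_inv[OF s]] by simp
  have eq: "\<forall>i<?N. Hl r ! inv \<pi> i = Hl r ! inv \<sigma> i"
    using e unfolding perm_act_def length_Hl by (simp add: map_eq_conv)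
  have st: "Hl r ! (\<rho> j) = Hl r ! j" if "j < ?N" for j
  proof -
    have "\<pi> j < ?N" using permutes_in_image[OF p] that by simp
    from eq[rule_format, OF this] show ?thesis
      unfolding \<rho>_def using permutes_inverses(2)[OF p] by simp
  qed
  have "\<rho> ` interval r k = interval r k" if k: "k < length r" for k
  proof
    show "\<rho> ` interval r k \<subseteq> interval r k"
      unfolding interval_fiber[OF k] using st permutes_in_image[OF rp] by auto
  next
    show "interval r k \<subseteq> \<rho> ` interval r k"
    proof
      fix j assume "j \<in> interval r k"
      hence j: "j < ?N" "Hl r ! j = k" unfolding interval_fiber[OF k] by auto
      define m where "m = inv \<rho> j"
      have rm: "\<rho> m = j" unfolding m_def using permutes_inverses(1)[OF rp] by simp
      have m: "m < ?N" unfolding m_def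
        using permutes_in_image[OF permutes_inv[OF rp]] j by simp
      have "Hl r ! m = k" using st[OF m] rm j by simp
      thus "j \<in> \<rho> ` interval r k" using rm m unfolding interval_fiber[OF k] by auto
    qed
  qed
  thus ?thesis using rp unfolding young_def \<rho>_def by auto
qed

definition Sfib :: "nat list \<Rightarrow> nat list \<Rightarrow> (nat \<Rightarrow> nat) set" where
  "Sfib r k = {\<pi>. \<pi> permutes {0..<sum_list r} \<and> perm_act \<pi> (Hl r) = k}"

lemma coset_eq:
  assumes s: "\<sigma> permutes {0..<sum_list r}"
  shows "(\<lambda>\<tau>. \<sigma> \<circ> \<tau>) ` young r = Sfib r (perm_act \<sigma> (Hl r))"
proof
  show "(\<lambda>\<tau>. \<sigma> \<circ> \<tau>) ` young r \<subseteq> Sfib r (perm_act \<sigma> (Hl r))"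
    unfolding Sfib_def using perm_act_young[OF s] permutes_compose[OF _ s]
    by (auto simp: young_def)
next
  show "Sfib r (perm_act \<sigma> (Hl r)) \<subseteq> (\<lambda>\<tau>. \<sigma> \<circ> \<tau>) ` young r"
  proof
    fix \<pi> assume "\<pi> \<in> Sfib r (perm_act \<sigma> (Hl r))"
    hence p: "\<pi> permutes {0..<sum_list r}" "perm_act \<pi> (Hl r) = perm_act \<sigma> (Hl r)"
      unfolding Sfib_def by auto
    have y: "inv \<sigma> \<circ> \<pi> \<in> young r" using perm_act_same_young[OF s p] .
    have "\<sigma> \<circ> (inv \<sigma> \<circ> \<pi>) = \<pi>"
      using permutes_inv_o(1)[OF s] by (simp add: o_assoc)
    thus "\<pi> \<in> (\<lambda>\<tau>. \<sigma> \<circ> \<tau>) ` young r" using y by (metis image_eqI)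
  qed
qed

definition Orb :: "nat list \<Rightarrow> nat list set" where
  "Orb r = {perm_act \<sigma> (Hl r) | \<sigma>. \<sigma> permutes {0..<sum_list r}}"

lemma cosets_eq: "cosets r = Sfib r ` Orb r"
  unfolding cosets_def Orb_def using coset_eq by blast

lemma finite_Orb: "finite (Orb r)"
proof -
  have "Orb r = (\<lambda>\<sigma>. perm_act \<sigma> (Hl r)) ` {\<sigma>. \<sigma> permutes {0..<sum_list r}}"
    unfolding Orb_def by blast
  thus ?thesis using finite_permutations[of "{0..<sum_list r}"] by simp
qed

lemma Sfib_some:
  assumes "k \<in> Orb r"
  shows "(SOME \<sigma>. \<sigma> \<in> Sfib r k) \<in> Sfib r k"
proof -
  from assms obtain \<sigma> where "\<sigma> \<in> Sfib r k" unfolding Orb_def Sfib_def by blast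
  thus ?thesis by (metis someI_ex)
qed

lemma inj_Sfib: "inj_on (Sfib r) (Orb r)"
proof (rule inj_onI)
  fix k k' assume k: "k \<in> Orb r" "k' \<in> Orb r" "Sfib r k = Sfib r k'"
  from Sfib_some[OF k(1)] k(3) have "(SOME \<sigma>. \<sigma> \<in> Sfib r k) \<in> Sfib r k'" by simp
  thus "k = k'" using Sfib_some[OF k(1)] unfolding Sfib_def by auto
qed

lemma blocks_rep: "blocks r (replicate (length r) c) = replicate (sum_list r) c"
proof (rule replicate_eqI)
  have "map (\<lambda>j. r ! j) [0..<length r] = r" by (rule map_nth)
  hence "sum_list (map (\<lambda>j. r ! j) [0..<length r]) = sum_list r" by simp
  thus "length (blocks r (replicate (length r) c)) = sum_list r"
    unfolding blocks_def by (simp add: length_concat o_def)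
next
  fix y assume "y \<in> set (blocks r (replicate (length r) c))"
  thus "y = c" unfolding blocks_def by auto
qed

lemma perm_act_rep:
  assumes s: "\<sigma> permutes {0..<N}"
  shows "perm_act \<sigma> (replicate N c) = replicate N c"
proof -
  have "\<And>i. i < N \<Longrightarrow> inv \<sigma> i < N"
    using permutes_in_image[OF permutes_inv[OF s]] by simp
  hence "map (\<lambda>i. replicate N c ! inv \<sigma> i) [0..<N] = map (\<lambda>i. c) [0..<N]" by simp
  thus ?thesis unfolding perm_act_def by (simp add: map_replicate_const)
qed

lemma ptensor_rep:
  "ptensor (replicate N (oneL :: nat list \<Rightarrow> 'a::field)) gs
   = (if gs = replicate N [0] then 1 else 0)"
proof (cases "length gs = N")
  case False
  thus ?thesis unfolding ptensor_def by auto
next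
  case True
  show ?thesis
  proof (cases "gs = replicate N [0]")
    case True
    thus ?thesis unfolding ptensor_def by (simp add: oneL_def)
  next
    case F: False
    then obtain i where i: "i < N" "gs ! i \<noteq> [0]"
      using True by (metis in_set_conv_nth replicate_eqI)
    have "(\<Prod>i<N. (replicate N (oneL :: nat list \<Rightarrow> 'a) ! i) (gs ! i)) = 0"
      using i by (intro prod_zero) (auto simp: oneL_def)
    thus ?thesis using True F unfolding ptensor_def by simp
  qed
qed

lemma concat_single: "concat (map (\<lambda>j. [f j]) xs) = map f xs"
  by (induction xs) auto

lemma op_comp_Z:
  assumes "length k = N"
  shows "op_comp k (replicate N [0]) = k"
proof -
  have "map (\<lambda>j. map (\<lambda>t. k ! j + t) (replicate N [0] ! j)) [0..<length k]
        = map (\<lambda>j. [k ! j]) [0..<length k]" using assms by (intro map_cong) auto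
  hence "op_comp k (replicate N [0]) = concat (map (\<lambda>j. [k ! j]) [0..<length k])"
    unfolding op_comp_def by (rule arg_cong[where f=concat])
  also have "\<dots> = map (\<lambda>j. k ! j) [0..<length k]" by (rule concat_single)
  also have "\<dots> = k" by (rule map_nth)
  finally show ?thesis .
qed

lemma length_Orb: "k \<in> Orb r \<Longrightarrow> length k = sum_list r"
  unfolding Orb_def perm_act_def by (auto simp: length_Hl)

lemma phi_generic:
  "phi (Hl r) r (replicate (length r) (oneL :: nat list \<Rightarrow> 'a::field))
   = (\<lambda>k. if k \<in> Orb r then 1 else 0)"
proof
  fix k
  let ?N = "sum_list r"
  let ?Z = "replicate ?N [0::nat]"
  define \<Phi> where "\<Phi> = (\<lambda>x. \<Sum>C\<in>cosets r.
       (let \<sigma> = (SOME \<sigma>. \<sigma> \<in> C) in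
        (if fst x = perm_act \<sigma> (Hl r) then 1 else 0) *
        ptensor (perm_act \<sigma> (blocks r (replicate (length r) (oneL :: nat list \<Rightarrow> 'a)))) (snd x)))"
  have \<Phi>: "\<Phi> x = (if fst x \<in> Orb r \<and> snd x = ?Z then 1 else 0)" for x
  proof -
    have "\<Phi> x = (\<Sum>C\<in>Sfib r ` Orb r.
       (let \<sigma> = (SOME \<sigma>. \<sigma> \<in> C) in
        (if fst x = perm_act \<sigma> (Hl r) then 1 else 0) *
        ptensor (perm_act \<sigma> (blocks r (replicate (length r) (oneL :: nat list \<Rightarrow> 'a)))) (snd x)))"
      unfolding \<Phi>_def cosets_eq ..
    also have "\<dots> = (\<Sum>k\<in>Orb r.
       (let \<sigma> = (SOME \<sigma>. \<sigma> \<in> Sfib r k) in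
        (if fst x = perm_act \<sigma> (Hl r) then 1 else 0) *
        ptensor (perm_act \<sigma> (blocks r (replicate (length r) (oneL :: nat list \<Rightarrow> 'a)))) (snd x)))"
      by (rule sum.reindex[OF inj_Sfib, unfolded o_def])
    also have "\<dots> = (\<Sum>k\<in>Orb r. (if fst x = k then 1 else 0) *
                       (if snd x = ?Z then 1 else 0))"
    proof (rule sum.cong[OF refl])
      fix k assume k: "k \<in> Orb r"
      have m: "(SOME \<sigma>. \<sigma> \<in> Sfib r k) \<in> Sfib r k" by (rule Sfib_some[OF k])
      hence p: "(SOME \<sigma>. \<sigma> \<in> Sfib r k) permutes {0..<?N}"
        and a: "perm_act (SOME \<sigma>. \<sigma> \<in> Sfib r k) (Hl r) = k"
        unfolding Sfib_def by auto
      show "(let \<sigma> = (SOME \<sigma>. \<sigma> \<in> Sfib r k) in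
        (if fst x = perm_act \<sigma> (Hl r) then 1 else 0) *
        ptensor (perm_act \<sigma> (blocks r (replicate (length r) (oneL :: nat list \<Rightarrow> 'a)))) (snd x))
        = (if fst x = k then 1 else 0) * (if snd x = ?Z then 1 else 0)"
        unfolding Let_def a blocks_rep perm_act_rep[OF p] ptensor_rep ..
    qed
    also have "\<dots> = (if fst x \<in> Orb r \<and> snd x = ?Z then 1 else 0)"
      using finite_Orb[of r] by (simp add: sum_distrib_right[symmetric] sum.delta')
    finally show ?thesis .
  qed
  have set: "{x. \<Phi> x \<noteq> 0 \<and> op_comp (fst x) (snd x) = k}
             = (if k \<in> Orb r then {(k, ?Z)} else {})"
  proof -
    have oc: "op_comp a ?Z = a" if "a \<in> Orb r" for a
      using op_comp_Z length_Orb[OF that] by blast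
    show ?thesis using oc by (auto simp: \<Phi> split: if_splits)
  qed
  show "phi (Hl r) r (replicate (length r) (oneL :: nat list \<Rightarrow> 'a)) k
        = (if k \<in> Orb r then 1 else 0)"
    unfolding phi_def gamma_mu_def \<Phi>_def[symmetric] set using \<Phi> by simp
qed

lemma ul_Hl: "ul u = Hl (map u [0..<Suc (ord u)])"
proof -
  have "map (\<lambda>j. replicate (map u [0..<Suc (ord u)] ! j) j) [0..<Suc (ord u)]
        = map (\<lambda>j. replicate (u j) j) [0..<Suc (ord u)]"
    by (intro map_cong) (auto simp del: upt_Suc)
  thus ?thesis unfolding ul_def Hl_def length_map length_upt by (metis diff_zero)
qed

lemma bhs_sum:
  assumes "u \<in> bhs n"
  shows "sum_list (map u [0..<Suc (ord u)]) = n"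
proof -
  let ?S = "{i. u i \<noteq> 0}"
  have fin: "finite ?S" and sn: "(\<Sum>i\<in>?S. u i) = n"
    and s1: "(\<Sum>i\<in>?S. real (u i) * (1/2) ^ i) = 1"
    using assms unfolding bhs_def by auto
  have le: "i \<le> ord u" if "i \<in> ?S" for i
    unfolding ord_def
    by (rule Greatest_le_nat[of "\<lambda>j. u j \<noteq> 0" i "Max ?S"]) (use that fin in auto)
  have "?S \<subseteq> {0..<Suc (ord u)}"
  proof
    fix i assume "i \<in> ?S" thus "i \<in> {0..<Suc (ord u)}" using le[of i] by simp
  qed
  hence "(\<Sum>i\<in>?S. u i) = (\<Sum>i\<in>{0..<Suc (ord u)}. u i)"
    by (intro sum.mono_neutral_left) auto
  thus ?thesis using sn sum_set_upt_conv_sum_list_nat[of u 0 "Suc (ord u)"] by simp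
qed

theorem lemma6p11:
  fixes u :: "nat \<Rightarrow> nat" and n :: nat
  assumes "u \<in> bhs n"
  shows "phi (ul u) (map u [0..<Suc (ord u)])
             (replicate (Suc (ord u)) (oneL :: nat list \<Rightarrow> 'a::field))
         = orbit_sum n (ul u)"
proof -
  let ?r = "map u [0..<Suc (ord u)]"
  have L: "length ?r = Suc (ord u)" by simp
  have N: "sum_list ?r = n" by (rule bhs_sum[OF assms])
  have "phi (Hl ?r) ?r (replicate (length ?r) (oneL :: nat list \<Rightarrow> 'a))
        = (\<lambda>k. if k \<in> Orb ?r then 1 else 0)" by (rule phi_generic)
  also have "\<dots> = orbit_sum n (Hl ?r)"
    unfolding orbit_sum_def Orb_def N by simp
  finally show ?thesis unfolding ul_Hl[symmetric] L .
qed

end
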